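(* Let $n\ge 2$ and let $f$ be the $n$-ary operation on $\mathbb{Z}_8$ given by $f(\mathbf{x})=x_1x_2\cdots x_n\sum_{\alpha\in I_n}b_\alpha\mathbf{x}^\alpha$ with $b_\alpha\in\{0,1\}$ for every $\alpha\in I_n$. If $f$ preserves the relation $Z$, then $b_\alpha=0$ for every $\alpha\in I_n$.
   Context: $I_n$ is the set of all $n$-tuples $\alpha\in\{0,1,2\}^n$ with at most two nonzero components, and $\mathbf{x}^\alpha=x_1^{\alpha_1}\cdots x_n^{\alpha_n}$. $P_4$ is the power set of $\{1,2,3,4\}$. For $A\in P_4$, $\mathbf{g}^A\in\mathbb{Z}_8^{P_4}$ is the tuple with $B$-component $1$ if $A\subseteq B$ and $0$ otherwise. Every $\mathbf{u}\in\mathbb{Z}_8^{P_4}$ has a unique expression $\mathbf{u}=\sum_{A\in P_4}a_A\mathbf{g}^A$ with $a_A\in\mathbb{Z}_8$. $Z\subseteq \mathbb{Z}_8^{P_4}$ consists of all $\mathbf{u}$ whose coefficients satisfy: (Z1) $a_{\{2\}}\equiv 2a_{\{1\}}\pmod 4$ and $a_{\{4\}}\equiv 2a_{\{3\}}\pmod 4$; (Z2) $a_A\equiv 0\pmod 2$ whenever $|A|\ge 2$; (Z3) $a_A\equiv 0\pmod 4$ whenever $|A|\ge 2$ and $A\cap\{2,4\}\neq\emptyset$; (Z4) $a_A=0$ whenever $\{2,4\}\subseteq A$. An operation preserves $Z$ if applying it componentwise to elements of $Z$ yields an element of $Z$. *)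

theory Defs
  imports Main
begin

text \<open>Z_8 is represented by the integers 0..7; all operations are taken mod 8.
  Tuples in Z_8^{P_4} are functions from subsets of {1,2,3,4} to Z_8 (value 0 outside P_4).\<close>

definition Z8 :: "int set" where
  "Z8 = {0..<8}"

definition P4 :: "nat set set" where
  "P4 = Pow {1,2,3,4}"

definition gen :: "nat set \<Rightarrow> nat set \<Rightarrow> int" where
  "gen A B = (if A \<subseteq> B then 1 else 0)"

definition lincomb :: "(nat set \<Rightarrow> int) \<Rightarrow> nat set \<Rightarrow> int" where
  "lincomb a = (\<lambda>B. if B \<in> P4 then (\<Sum>A\<in>P4. a A * gen A B) mod 8 else 0)"

definition Zcoeffs :: "(nat set \<Rightarrow> int) \<Rightarrow> bool" where
  "Zcoeffs a \<longleftrightarrow>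
     (\<forall>A\<in>P4. a A \<in> Z8) \<and>
     a {2} mod 4 = (2 * a {1}) mod 4 \<and> a {4} mod 4 = (2 * a {3}) mod 4 \<and>
     (\<forall>A\<in>P4. card A \<ge> 2 \<longrightarrow> a A mod 2 = 0) \<and>
     (\<forall>A\<in>P4. card A \<ge> 2 \<and> A \<inter> {2,4} \<noteq> {} \<longrightarrow> a A mod 4 = 0) \<and>
     (\<forall>A\<in>P4. {2,4} \<subseteq> A \<longrightarrow> a A = 0)"

text \<open>Since every tuple has a unique coefficient expression, Z is the set of tuples
  whose (unique) coefficients satisfy (Z1)-(Z4).\<close>
definition Zrel :: "(nat set \<Rightarrow> int) set" where
  "Zrel = {u. \<exists>a. Zcoeffs a \<and> u = lincomb a}"

definition preserves :: "nat \<Rightarrow> ((nat \<Rightarrow> int) \<Rightarrow> int) \<Rightarrow> (nat set \<Rightarrow> int) set \<Rightarrow> bool" where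
  "preserves n f R \<longleftrightarrow>
     (\<forall>us. (\<forall>i\<in>{1..n}. us i \<in> R) \<longrightarrow>
        (\<lambda>B. if B \<in> P4 then f (\<lambda>i. us i B) else 0) \<in> R)"

definition I :: "nat \<Rightarrow> (nat \<Rightarrow> nat) set" where
  "I n = {\<alpha>. (\<forall>i\<in>{1..n}. \<alpha> i \<le> 2) \<and> (\<forall>i. i \<notin> {1..n} \<longrightarrow> \<alpha> i = 0)
             \<and> card {i\<in>{1..n}. \<alpha> i \<noteq> 0} \<le> 2}"

definition monom :: "nat \<Rightarrow> (nat \<Rightarrow> nat) \<Rightarrow> (nat \<Rightarrow> int) \<Rightarrow> int" where
  "monom n \<alpha> x = (\<Prod>i\<in>{1..n}. x i ^ \<alpha> i)"

definition fop :: "nat \<Rightarrow> ((nat \<Rightarrow> nat) \<Rightarrow> int) \<Rightarrow> (nat \<Rightarrow> int) \<Rightarrow> int" where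
  "fop n b x = ((\<Prod>i\<in>{1..n}. x i) * (\<Sum>\<alpha>\<in>I n. b \<alpha> * monom n \<alpha> x)) mod 8"

end

theory Submission
  imports Defs
begin

lemma sum_Pow_insert:
  assumes "finite A" "x \<notin> A"
  shows "(\<Sum>S\<in>Pow (insert x A). h S) = (\<Sum>S\<in>Pow A. h S) + (\<Sum>S\<in>Pow A. h (insert x S))"
proof -
  have "Pow (insert x A) = Pow A \<union> insert x ` Pow A" by (rule Pow_insert)
  moreover have "Pow A \<inter> insert x ` Pow A = {}" using assms(2) by auto
  moreover have "inj_on (insert x) (Pow A)" using assms(2) unfolding inj_on_def by auto
  ultimately show ?thesis using assms(1)
    by (simp add: sum.union_disjoint sum.reindex)
qed

lemma sumP4: "(\<Sum>A\<in>P4. h A) = h {} + h {4} + h {3} + h {3,4} + h {2} + h {2,4} + h {2,3} + h {2,3,4}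
  + h {1} + h {1,4} + h {1,3} + h {1,3,4} + h {1,2} + h {1,2,4} + h {1,2,3} + h {1,2,3,4}"
  unfolding P4_def by (simp add: sum_Pow_insert add.assoc)

definition ux :: "nat set \<Rightarrow> int" where
  "ux B = (if 3 \<in> B then 1 else 0) + (if 4 \<in> B then 2 else 0)"
definition uy :: "nat set \<Rightarrow> int" where
  "uy B = (if 1 \<in> B then 1 else 0) + (if 2 \<in> B then 2 else 0)"

lemma lincomb_at: "B \<in> P4 \<Longrightarrow> lincomb a B = (\<Sum>A\<in>P4. a A * gen A B) mod 8"
  by (simp add: lincomb_def)

lemma P4_mem: "A \<subseteq> {1,2,3,4} \<Longrightarrow> A \<in> P4" by (simp add: P4_def)

lemma test: "lincomb a {1,3,4} = (a {} + a {1} + a{3} + a{4} + a{1,3} + a{1,4} + a{3,4} + a{1,3,4}) mod 8"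
  by (simp add: lincomb_at P4_mem sumP4 gen_def algebra_simps)

lemma arith9:
  fixes m00 m01 m02 m10 m11 m12 m20 m21 m22 a13 a14 a23 a24 a123 a124 a134 a234 a1234 :: int
  assumes
    h13: "(m00 + m01 + m02 + m10 + m11 + m12 + m20 + m21 + m22) mod 8 = (a13) mod 8"
  and     h14: "(2 * m00 + 2 * m01 + 2 * m02 + 4 * m10 + 4 * m11 + 4 * m12 + 8 * m20 + 8 * m21 + 8 * m22) mod 8 = (a14) mod 8"
  and     h23: "(2 * m00 + 4 * m01 + 8 * m02 + 2 * m10 + 4 * m11 + 8 * m12 + 2 * m20 + 4 * m21 + 8 * m22) mod 8 = (a23) mod 8"
  and     h24: "(4 * m00 + 8 * m01 + 16 * m02 + 8 * m10 + 16 * m11 + 32 * m12 + 16 * m20 + 32 * m21 + 64 * m22) mod 8 = (a24) mod 8"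
  and     h123: "(3 * m00 + 9 * m01 + 27 * m02 + 3 * m10 + 9 * m11 + 27 * m12 + 3 * m20 + 9 * m21 + 27 * m22) mod 8 = (a13 + a23 + a123) mod 8"
  and     h124: "(6 * m00 + 18 * m01 + 54 * m02 + 12 * m10 + 36 * m11 + 108 * m12 + 24 * m20 + 72 * m21 + 216 * m22) mod 8 = (a14 + a24 + a124) mod 8"
  and     h134: "(3 * m00 + 3 * m01 + 3 * m02 + 9 * m10 + 9 * m11 + 9 * m12 + 27 * m20 + 27 * m21 + 27 * m22) mod 8 = (a13 + a14 + a134) mod 8"
  and     h234: "(6 * m00 + 12 * m01 + 24 * m02 + 18 * m10 + 36 * m11 + 72 * m12 + 54 * m20 + 108 * m21 + 216 * m22) mod 8 = (a23 + a24 + a234) mod 8"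
  and     h1234: "(9 * m00 + 27 * m01 + 81 * m02 + 27 * m10 + 81 * m11 + 243 * m12 + 81 * m20 + 243 * m21 + 729 * m22) mod 8 = (a13 + a14 + a23 + a24 + a123 + a124 + a134 + a234 + a1234) mod 8"
  and     c13: "a13 mod 2 = 0"
  and     c14: "a14 mod 4 = 0"
  and     c23: "a23 mod 4 = 0"
  and     c123: "a123 mod 4 = 0"
  and     c134: "a134 mod 4 = 0"
  and     c24: "a24 = 0"
  and     c124: "a124 = 0"
  and     c234: "a234 = 0"
  and     c1234: "a1234 = 0"
  shows "even m00 \<and> even m01 \<and> even m02 \<and> even m10 \<and> even m11 \<and> even m12 \<and> even m20 \<and> even m21 \<and> even m22"
proof -
  have d13: "8 dvd ((m00 + m01 + m02 + m10 + m11 + m12 + m20 + m21 + m22) - (a13))" using mod_eq_dvd_iff[THEN iffD1, OF h13] .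
  have d14: "8 dvd ((2 * m00 + 2 * m01 + 2 * m02 + 4 * m10 + 4 * m11 + 4 * m12 + 8 * m20 + 8 * m21 + 8 * m22) - (a14))" using mod_eq_dvd_iff[THEN iffD1, OF h14] .
  have d23: "8 dvd ((2 * m00 + 4 * m01 + 8 * m02 + 2 * m10 + 4 * m11 + 8 * m12 + 2 * m20 + 4 * m21 + 8 * m22) - (a23))" using mod_eq_dvd_iff[THEN iffD1, OF h23] .
  have d24: "8 dvd ((4 * m00 + 8 * m01 + 16 * m02 + 8 * m10 + 16 * m11 + 32 * m12 + 16 * m20 + 32 * m21 + 64 * m22) - (a24))" using mod_eq_dvd_iff[THEN iffD1, OF h24] .
  have d123: "8 dvd ((3 * m00 + 9 * m01 + 27 * m02 + 3 * m10 + 9 * m11 + 27 * m12 + 3 * m20 + 9 * m21 + 27 * m22) - (a13 + a23 + a123))" using mod_eq_dvd_iff[THEN iffD1, OF h123] .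
  have d124: "8 dvd ((6 * m00 + 18 * m01 + 54 * m02 + 12 * m10 + 36 * m11 + 108 * m12 + 24 * m20 + 72 * m21 + 216 * m22) - (a14 + a24 + a124))" using mod_eq_dvd_iff[THEN iffD1, OF h124] .
  have d134: "8 dvd ((3 * m00 + 3 * m01 + 3 * m02 + 9 * m10 + 9 * m11 + 9 * m12 + 27 * m20 + 27 * m21 + 27 * m22) - (a13 + a14 + a134))" using mod_eq_dvd_iff[THEN iffD1, OF h134] .
  have d234: "8 dvd ((6 * m00 + 12 * m01 + 24 * m02 + 18 * m10 + 36 * m11 + 72 * m12 + 54 * m20 + 108 * m21 + 216 * m22) - (a23 + a24 + a234))" using mod_eq_dvd_iff[THEN iffD1, OF h234] .
  have d1234: "8 dvd ((9 * m00 + 27 * m01 + 81 * m02 + 27 * m10 + 81 * m11 + 243 * m12 + 81 * m20 + 243 * m21 + 729 * m22) - (a13 + a14 + a23 + a24 + a123 + a124 + a134 + a234 + a1234))" using mod_eq_dvd_iff[THEN iffD1, OF h1234] .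
  have eq13: "(m00 + m01 + m02 + m10 + m11 + m12 + m20 + m21 + m22) - a13 = (((m00 + m01 + m02 + m10 + m11 + m12 + m20 + m21 + m22) - (a13))) - 8 * (0)" by (simp add: algebra_simps)
  have g13: "8 dvd ((m00 + m01 + m02 + m10 + m11 + m12 + m20 + m21 + m22) - a13)" using d13 by (subst eq13) ((assumption | rule dvd_diff dvd_add dvd_triv_left dvd_minus_iff[THEN iffD2])+)
  have eq14: "(2 * m00 + 2 * m01 + 2 * m02 + 4 * m10 + 4 * m11 + 4 * m12) - a14 = (((2 * m00 + 2 * m01 + 2 * m02 + 4 * m10 + 4 * m11 + 4 * m12 + 8 * m20 + 8 * m21 + 8 * m22) - (a14))) - 8 * (m20 + m21 + m22)" by (simp add: algebra_simps)
  have g14: "8 dvd ((2 * m00 + 2 * m01 + 2 * m02 + 4 * m10 + 4 * m11 + 4 * m12) - a14)" using d14 by (subst eq14) ((assumption | rule dvd_diff dvd_add dvd_triv_left dvd_minus_iff[THEN iffD2])+)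
  have eq23: "(2 * m00 + 4 * m01 + 2 * m10 + 4 * m11 + 2 * m20 + 4 * m21) - a23 = (((2 * m00 + 4 * m01 + 8 * m02 + 2 * m10 + 4 * m11 + 8 * m12 + 2 * m20 + 4 * m21 + 8 * m22) - (a23))) - 8 * (m02 + m12 + m22)" by (simp add: algebra_simps)
  have g23: "8 dvd ((2 * m00 + 4 * m01 + 2 * m10 + 4 * m11 + 2 * m20 + 4 * m21) - a23)" using d23 by (subst eq23) ((assumption | rule dvd_diff dvd_add dvd_triv_left dvd_minus_iff[THEN iffD2])+)
  have eq24: "(4 * m00) - a24 = (((4 * m00 + 8 * m01 + 16 * m02 + 8 * m10 + 16 * m11 + 32 * m12 + 16 * m20 + 32 * m21 + 64 * m22) - (a24))) - 8 * (m01 + 2 * m02 + m10 + 2 * m11 + 4 * m12 + 2 * m20 + 4 * m21 + 8 * m22)" by (simp add: algebra_simps)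
  have g24: "8 dvd ((4 * m00) - a24)" using d24 by (subst eq24) ((assumption | rule dvd_diff dvd_add dvd_triv_left dvd_minus_iff[THEN iffD2])+)
  have eq123: "(4 * m01 + 2 * m02 + 4 * m11 + 2 * m12 + 4 * m21 + 2 * m22) - a123 = (- ((m00 + m01 + m02 + m10 + m11 + m12 + m20 + m21 + m22) - (a13)) - ((2 * m00 + 4 * m01 + 8 * m02 + 2 * m10 + 4 * m11 + 8 * m12 + 2 * m20 + 4 * m21 + 8 * m22) - (a23)) + ((3 * m00 + 9 * m01 + 27 * m02 + 3 * m10 + 9 * m11 + 27 * m12 + 3 * m20 + 9 * m21 + 27 * m22) - (a13 + a23 + a123))) - 8 * (2 * m02 + 2 * m12 + 2 * m22)" by (simp add: algebra_simps)
  have g123: "8 dvd ((4 * m01 + 2 * m02 + 4 * m11 + 2 * m12 + 4 * m21 + 2 * m22) - a123)" using d13 d23 d123 by (subst eq123) ((assumption | rule dvd_diff dvd_add dvd_triv_left dvd_minus_iff[THEN iffD2])+)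
  have eq124: "(4 * m02) - a124 = (- ((2 * m00 + 2 * m01 + 2 * m02 + 4 * m10 + 4 * m11 + 4 * m12 + 8 * m20 + 8 * m21 + 8 * m22) - (a14)) - ((4 * m00 + 8 * m01 + 16 * m02 + 8 * m10 + 16 * m11 + 32 * m12 + 16 * m20 + 32 * m21 + 64 * m22) - (a24)) + ((6 * m00 + 18 * m01 + 54 * m02 + 12 * m10 + 36 * m11 + 108 * m12 + 24 * m20 + 72 * m21 + 216 * m22) - (a14 + a24 + a124))) - 8 * (m01 + 4 * m02 + 2 * m11 + 9 * m12 + 4 * m21 + 18 * m22)" by (simp add: algebra_simps)
  have g124: "8 dvd ((4 * m02) - a124)" using d14 d24 d124 by (subst eq124) ((assumption | rule dvd_diff dvd_add dvd_triv_left dvd_minus_iff[THEN iffD2])+)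
  have eq134: "(4 * m10 + 4 * m11 + 4 * m12 + 2 * m20 + 2 * m21 + 2 * m22) - a134 = (- ((m00 + m01 + m02 + m10 + m11 + m12 + m20 + m21 + m22) - (a13)) - ((2 * m00 + 2 * m01 + 2 * m02 + 4 * m10 + 4 * m11 + 4 * m12 + 8 * m20 + 8 * m21 + 8 * m22) - (a14)) + ((3 * m00 + 3 * m01 + 3 * m02 + 9 * m10 + 9 * m11 + 9 * m12 + 27 * m20 + 27 * m21 + 27 * m22) - (a13 + a14 + a134))) - 8 * (2 * m20 + 2 * m21 + 2 * m22)" by (simp add: algebra_simps)
  have g134: "8 dvd ((4 * m10 + 4 * m11 + 4 * m12 + 2 * m20 + 2 * m21 + 2 * m22) - a134)" using d13 d14 d134 by (subst eq134) ((assumption | rule dvd_diff dvd_add dvd_triv_left dvd_minus_iff[THEN iffD2])+)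
  have eq234: "(4 * m20) - a234 = (- ((2 * m00 + 4 * m01 + 8 * m02 + 2 * m10 + 4 * m11 + 8 * m12 + 2 * m20 + 4 * m21 + 8 * m22) - (a23)) - ((4 * m00 + 8 * m01 + 16 * m02 + 8 * m10 + 16 * m11 + 32 * m12 + 16 * m20 + 32 * m21 + 64 * m22) - (a24)) + ((6 * m00 + 12 * m01 + 24 * m02 + 18 * m10 + 36 * m11 + 72 * m12 + 54 * m20 + 108 * m21 + 216 * m22) - (a23 + a24 + a234))) - 8 * (m10 + 2 * m11 + 4 * m12 + 4 * m20 + 9 * m21 + 18 * m22)" by (simp add: algebra_simps)
  have g234: "8 dvd ((4 * m20) - a234)" using d23 d24 d234 by (subst eq234) ((assumption | rule dvd_diff dvd_add dvd_triv_left dvd_minus_iff[THEN iffD2])+)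
  have eq1234: "(4 * m22) - a1234 = (((m00 + m01 + m02 + m10 + m11 + m12 + m20 + m21 + m22) - (a13)) + ((2 * m00 + 2 * m01 + 2 * m02 + 4 * m10 + 4 * m11 + 4 * m12 + 8 * m20 + 8 * m21 + 8 * m22) - (a14)) + ((2 * m00 + 4 * m01 + 8 * m02 + 2 * m10 + 4 * m11 + 8 * m12 + 2 * m20 + 4 * m21 + 8 * m22) - (a23)) + ((4 * m00 + 8 * m01 + 16 * m02 + 8 * m10 + 16 * m11 + 32 * m12 + 16 * m20 + 32 * m21 + 64 * m22) - (a24)) - ((3 * m00 + 9 * m01 + 27 * m02 + 3 * m10 + 9 * m11 + 27 * m12 + 3 * m20 + 9 * m21 + 27 * m22) - (a13 + a23 + a123)) - ((6 * m00 + 18 * m01 + 54 * m02 + 12 * m10 + 36 * m11 + 108 * m12 + 24 * m20 + 72 * m21 + 216 * m22) - (a14 + a24 + a124)) - ((3 * m00 + 3 * m01 + 3 * m02 + 9 * m10 + 9 * m11 + 9 * m12 + 27 * m20 + 27 * m21 + 27 * m22) - (a13 + a14 + a134)) - ((6 * m00 + 12 * m01 + 24 * m02 + 18 * m10 + 36 * m11 + 72 * m12 + 54 * m20 + 108 * m21 + 216 * m22) - (a23 + a24 + a234)) + ((9 * m00 + 27 * m01 + 81 * m02 + 27 * m10 + 81 * m11 + 243 * m12 + 81 * m20 + 243 * m21 + 729 * m22) - (a13 + a14 + a23 + a24 + a123 + a124 + a134 + a234 + a1234))) - 8 * (2 * m11 + 9 * m12 + 9 * m21 + 40 * m22)" by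 (simp add: algebra_simps)
  have g1234: "8 dvd ((4 * m22) - a1234)" using d13 d14 d23 d24 d123 d124 d134 d234 d1234 by (subst eq1234) ((assumption | rule dvd_diff dvd_add dvd_triv_left dvd_minus_iff[THEN iffD2])+)
  have m00: "even m00" using g24 c24 by presburger
  have m02: "even m02" using g124 c124 by presburger
  have m20: "even m20" using g234 c234 by presburger
  have m22: "even m22" using g1234 c1234 by presburger
  have m01: "even m01" using g14 c14 m00 m02 by presburger
  have m10: "even m10" using g23 c23 m00 m20 by presburger
  have m12: "even m12" using g123 c123 m02 m22 by presburger
  have m21: "even m21" using g134 c134 m20 m22 by presburger
  have s13: "even ((m00 + m01 + m02 + m10 + m11 + m12 + m20 + m21 + m22) - a13)" using g13 by (rule dvd_trans[rotated]) simp
  have e13: "even a13" using c13 by (simp add: even_iff_mod_2_eq_zero)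
  have m11: "even m11" using s13 e13 m00 m01 m02 m10 m12 m20 m21 m22 by simp
  show ?thesis using m00 m01 m02 m10 m11 m12 m20 m21 m22 by blast
qed

definition polyP :: "(nat \<Rightarrow> nat \<Rightarrow> int) \<Rightarrow> int \<Rightarrow> int \<Rightarrow> int" where
  "polyP m x y = x * y * (m 0 0 + m 0 1 * y + m 0 2 * y^2 + m 1 0 * x + m 1 1 * x * y + m 1 2 * x * y^2
     + m 2 0 * x^2 + m 2 1 * x^2 * y + m 2 2 * x^2 * y^2)"

lemma zmain:
  assumes "(\<lambda>B. if B \<in> P4 then polyP m (ux B) (uy B) mod 8 else 0) \<in> Zrel"
  shows "even (m 0 0) \<and> even (m 0 1) \<and> even (m 0 2) \<and> even (m 1 0) \<and> even (m 1 1) \<and> even (m 1 2)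
     \<and> even (m 2 0) \<and> even (m 2 1) \<and> even (m 2 2)"
proof -
  define Q where "Q B = polyP m (ux B) (uy B)" for B
  obtain a where Z: "Zcoeffs a" and L: "(\<lambda>B. if B \<in> P4 then Q B mod 8 else 0) = lincomb a"
    using assms unfolding Zrel_def Q_def by auto
  have W: "\<forall>B\<in>P4. Q B mod 8 = (\<Sum>A\<in>P4. a A * gen A B) mod 8"
  proof
    fix B assume "B \<in> P4"
    then show "Q B mod 8 = (\<Sum>A\<in>P4. a A * gen A B) mod 8"
      using fun_cong[OF L, of B] by (simp add: lincomb_def)
  qed
  have e0: "Q {} mod 8 = (\<Sum>A\<in>P4. a A * gen A {}) mod 8" using W by (simp add: P4_mem)
  have e1: "Q {1} mod 8 = (\<Sum>A\<in>P4. a A * gen A {1}) mod 8" using W by (simp add: P4_mem)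
  have e2: "Q {2} mod 8 = (\<Sum>A\<in>P4. a A * gen A {2}) mod 8" using W by (simp add: P4_mem)
  have e3: "Q {3} mod 8 = (\<Sum>A\<in>P4. a A * gen A {3}) mod 8" using W by (simp add: P4_mem)
  have e4: "Q {4} mod 8 = (\<Sum>A\<in>P4. a A * gen A {4}) mod 8" using W by (simp add: P4_mem)
  have e12: "Q {1,2} mod 8 = (\<Sum>A\<in>P4. a A * gen A {1,2}) mod 8" using W by (simp add: P4_mem)
  have e13: "Q {1,3} mod 8 = (\<Sum>A\<in>P4. a A * gen A {1,3}) mod 8" using W by (simp add: P4_mem)
  have e14: "Q {1,4} mod 8 = (\<Sum>A\<in>P4. a A * gen A {1,4}) mod 8" using W by (simp add: P4_mem)
  have e23: "Q {2,3} mod 8 = (\<Sum>A\<in>P4. a A * gen A {2,3}) mod 8" using W by (simp add: P4_mem)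
  have e24: "Q {2,4} mod 8 = (\<Sum>A\<in>P4. a A * gen A {2,4}) mod 8" using W by (simp add: P4_mem)
  have e34: "Q {3,4} mod 8 = (\<Sum>A\<in>P4. a A * gen A {3,4}) mod 8" using W by (simp add: P4_mem)
  have e123: "Q {1,2,3} mod 8 = (\<Sum>A\<in>P4. a A * gen A {1,2,3}) mod 8" using W by (simp add: P4_mem)
  have e124: "Q {1,2,4} mod 8 = (\<Sum>A\<in>P4. a A * gen A {1,2,4}) mod 8" using W by (simp add: P4_mem)
  have e134: "Q {1,3,4} mod 8 = (\<Sum>A\<in>P4. a A * gen A {1,3,4}) mod 8" using W by (simp add: P4_mem)
  have e234: "Q {2,3,4} mod 8 = (\<Sum>A\<in>P4. a A * gen A {2,3,4}) mod 8" using W by (simp add: P4_mem)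
  have e1234: "Q {1,2,3,4} mod 8 = (\<Sum>A\<in>P4. a A * gen A {1,2,3,4}) mod 8" using W by (simp add: P4_mem)
  have r0: "0 \<le> a {} \<and> a {} < 8" using Z by (simp add: Zcoeffs_def Z8_def P4_mem)
  have r1: "0 \<le> a {1} \<and> a {1} < 8" using Z by (simp add: Zcoeffs_def Z8_def P4_mem)
  have r2: "0 \<le> a {2} \<and> a {2} < 8" using Z by (simp add: Zcoeffs_def Z8_def P4_mem)
  have r3: "0 \<le> a {3} \<and> a {3} < 8" using Z by (simp add: Zcoeffs_def Z8_def P4_mem)
  have r4: "0 \<le> a {4} \<and> a {4} < 8" using Z by (simp add: Zcoeffs_def Z8_def P4_mem)
  have r12: "0 \<le> a {1,2} \<and> a {1,2} < 8" using Z by (simp add: Zcoeffs_def Z8_def P4_mem)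
  have r13: "0 \<le> a {1,3} \<and> a {1,3} < 8" using Z by (simp add: Zcoeffs_def Z8_def P4_mem)
  have r14: "0 \<le> a {1,4} \<and> a {1,4} < 8" using Z by (simp add: Zcoeffs_def Z8_def P4_mem)
  have r23: "0 \<le> a {2,3} \<and> a {2,3} < 8" using Z by (simp add: Zcoeffs_def Z8_def P4_mem)
  have r24: "0 \<le> a {2,4} \<and> a {2,4} < 8" using Z by (simp add: Zcoeffs_def Z8_def P4_mem)
  have r34: "0 \<le> a {3,4} \<and> a {3,4} < 8" using Z by (simp add: Zcoeffs_def Z8_def P4_mem)
  have r123: "0 \<le> a {1,2,3} \<and> a {1,2,3} < 8" using Z by (simp add: Zcoeffs_def Z8_def P4_mem)
  have r124: "0 \<le> a {1,2,4} \<and> a {1,2,4} < 8" using Z by (simp add: Zcoeffs_def Z8_def P4_mem)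
  have r134: "0 \<le> a {1,3,4} \<and> a {1,3,4} < 8" using Z by (simp add: Zcoeffs_def Z8_def P4_mem)
  have r234: "0 \<le> a {2,3,4} \<and> a {2,3,4} < 8" using Z by (simp add: Zcoeffs_def Z8_def P4_mem)
  have r1234: "0 \<le> a {1,2,3,4} \<and> a {1,2,3,4} < 8" using Z by (simp add: Zcoeffs_def Z8_def P4_mem)
  note Zc = Z[unfolded Zcoeffs_def]
  note defs = Q_def polyP_def ux_def uy_def sumP4 gen_def
  note E = e0 e1 e2 e3 e4 e12 e13 e14 e23 e24 e34 e123 e124 e134 e234 e1234
  note E' = E[simplified defs, simplified]
  have Z2: "\<forall>A\<in>P4. 2 \<le> card A \<longrightarrow> a A mod 2 = 0" using Zc by blast
  have Z3: "\<forall>A\<in>P4. 2 \<le> card A \<and> A \<inter> {2,4} \<noteq> {} \<longrightarrow> a A mod 4 = 0" using Zc by blast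
  have Z4: "\<forall>A\<in>P4. {2,4} \<subseteq> A \<longrightarrow> a A = 0" using Zc by blast
  have c13: "a {1,3} mod 2 = 0" using Z2 by (drule_tac bspec[of _ _ "{1,3}"]) (simp_all add: P4_mem)
  have c14: "a {1,4} mod 4 = 0" using Z3 by (drule_tac bspec[of _ _ "{1,4}"]) (simp_all add: P4_mem)
  have c23: "a {2,3} mod 4 = 0" using Z3 by (drule_tac bspec[of _ _ "{2,3}"]) (simp_all add: P4_mem)
  have c123: "a {1,2,3} mod 4 = 0" using Z3 by (drule_tac bspec[of _ _ "{1,2,3}"]) (simp_all add: P4_mem)
  have c134: "a {1,3,4} mod 4 = 0" using Z3 by (drule_tac bspec[of _ _ "{1,3,4}"]) (simp_all add: P4_mem)
  have c24: "a {2,4} = 0" using Z4 by (drule_tac bspec[of _ _ "{2,4}"]) (simp_all add: P4_mem)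
  have c124: "a {1,2,4} = 0" using Z4 by (drule_tac bspec[of _ _ "{1,2,4}"]) (simp_all add: P4_mem)
  have c234: "a {2,3,4} = 0" using Z4 by (drule_tac bspec[of _ _ "{2,3,4}"]) (simp_all add: P4_mem)
  have c1234: "a {1,2,3,4} = 0" using Z4 by (drule_tac bspec[of _ _ "{1,2,3,4}"]) (simp_all add: P4_mem)
  note R = r0 r1 r2 r3 r4 r12 r13 r14 r23 r24 r34 r123 r124 r134 r234 r1234
  have z0: "a {} = 0" using E'(1) R by simp
  have z4: "a {4} = 0" using E'(5) R z0 by simp
  have z3: "a {3} = 0" using E'(4) R z0 by simp
  have z2: "a {2} = 0" using E'(3) R z0 by simp
  have z1: "a {1} = 0" using E'(2) R z0 by simp
  have z12: "a {1,2} = 0" using E'(6) R z0 z1 z2 by simp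
  have z34: "a {3,4} = 0" using E'(11) R z0 z3 z4 by simp
  note zs = z0 z1 z2 z3 z4 z12 z34 c24 c124 c234 c1234
  note zs' = zs[simplified]
  have h13: "(m 0 0 + m 0 1 + m 0 2 + m 1 0 + m 1 1 + m 1 2 + m 2 0 + m 2 1 + m 2 2) mod 8 = (a {1,3}) mod 8" using e13 by (simp add: defs zs'; simp add: ac_simps)
  have h14: "(2 * m 0 0 + 2 * m 0 1 + 2 * m 0 2 + 4 * m 1 0 + 4 * m 1 1 + 4 * m 1 2 + 8 * m 2 0 + 8 * m 2 1 + 8 * m 2 2) mod 8 = (a {1,4}) mod 8" using e14 by (simp add: defs zs'; simp add: ac_simps)
  have h23: "(2 * m 0 0 + 4 * m 0 1 + 8 * m 0 2 + 2 * m 1 0 + 4 * m 1 1 + 8 * m 1 2 + 2 * m 2 0 + 4 * m 2 1 + 8 * m 2 2) mod 8 = (a {2,3}) mod 8" using e23 by (simp add: defs zs'; simp add: ac_simps)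
  have h24: "(4 * m 0 0 + 8 * m 0 1 + 16 * m 0 2 + 8 * m 1 0 + 16 * m 1 1 + 32 * m 1 2 + 16 * m 2 0 + 32 * m 2 1 + 64 * m 2 2) mod 8 = (a {2,4}) mod 8" using e24 by (simp add: defs zs'; simp add: ac_simps)
  have h123: "(3 * m 0 0 + 9 * m 0 1 + 27 * m 0 2 + 3 * m 1 0 + 9 * m 1 1 + 27 * m 1 2 + 3 * m 2 0 + 9 * m 2 1 + 27 * m 2 2) mod 8 = (a {1,3} + a {2,3} + a {1,2,3}) mod 8" using e123 by (simp add: defs zs'; simp add: ac_simps)
  have h124: "(6 * m 0 0 + 18 * m 0 1 + 54 * m 0 2 + 12 * m 1 0 + 36 * m 1 1 + 108 * m 1 2 + 24 * m 2 0 + 72 * m 2 1 + 216 * m 2 2) mod 8 = (a {1,4} + a {2,4} + a {1,2,4}) mod 8" using e124 by (simp add: defs zs'; simp add: ac_simps)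
  have h134: "(3 * m 0 0 + 3 * m 0 1 + 3 * m 0 2 + 9 * m 1 0 + 9 * m 1 1 + 9 * m 1 2 + 27 * m 2 0 + 27 * m 2 1 + 27 * m 2 2) mod 8 = (a {1,3} + a {1,4} + a {1,3,4}) mod 8" using e134 by (simp add: defs zs'; simp add: ac_simps)
  have h234: "(6 * m 0 0 + 12 * m 0 1 + 24 * m 0 2 + 18 * m 1 0 + 36 * m 1 1 + 72 * m 1 2 + 54 * m 2 0 + 108 * m 2 1 + 216 * m 2 2) mod 8 = (a {2,3} + a {2,4} + a {2,3,4}) mod 8" using e234 by (simp add: defs zs'; simp add: ac_simps)
  have h1234: "(9 * m 0 0 + 27 * m 0 1 + 81 * m 0 2 + 27 * m 1 0 + 81 * m 1 1 + 243 * m 1 2 + 81 * m 2 0 + 243 * m 2 1 + 729 * m 2 2) mod 8 = (a {1,3} + a {1,4} + a {2,3} + a {2,4} + a {1,2,3} + a {1,2,4} + a {1,3,4} + a {2,3,4} + a {1,2,3,4}) mod 8" using e1234 by (simp add: defs zs'; simp add: ac_simps)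
  show ?thesis using arith9[OF h13 h14 h23 h24 h123 h124 h134 h234 h1234 c13 c14 c23 c123 c134 c24 c124 c234 c1234] by simp
qed

lemma finite_I: "finite (I n)"
proof -
  have "I n \<subseteq> {f. \<forall>x. (x \<in> {1..n} \<longrightarrow> f x \<in> {..2}) \<and> (x \<notin> {1..n} \<longrightarrow> f x = 0)}"
    by (auto simp: I_def)
  then show ?thesis by (rule finite_subset) (rule finite_set_of_finite_funs; simp)
qed

lemma prod_two:
  fixes h :: "nat \<Rightarrow> 'a::comm_monoid_mult"
  assumes "i \<in> {1..n}" "k \<in> {1..n}" "i \<noteq> k" "\<forall>j\<in>{1..n}. j \<noteq> i \<and> j \<noteq> k \<longrightarrow> h j = 1"
  shows "(\<Prod>j\<in>{1..n}. h j) = h i * h k"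
proof -
  have "(\<Prod>j\<in>{1..n}. h j) = h i * (\<Prod>j\<in>{1..n}-{i}. h j)" using assms(1) by (simp add: prod.remove)
  also have "(\<Prod>j\<in>{1..n}-{i}. h j) = h k * (\<Prod>j\<in>{1..n}-{i}-{k}. h j)"
    using assms by (intro prod.remove) auto
  also have "(\<Prod>j\<in>{1..n}-{i}-{k}. h j) = 1" using assms(4) by (intro prod.neutral) auto
  finally show ?thesis by (simp add: ac_simps)
qed

lemma fop_two:
  assumes "i \<in> {1..n}" "k \<in> {1..n}" "i \<noteq> k" and hx: "\<forall>j\<in>{1..n}. j \<noteq> i \<and> j \<noteq> k \<longrightarrow> x j = 1"
  shows "fop n b x = polyP (\<lambda>p q. \<Sum>\<alpha>\<in>{\<alpha>\<in>I n. \<alpha> i = p \<and> \<alpha> k = q}. b \<alpha>) (x i) (x k) mod 8"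
proof -
  define B where "B p q = (\<Sum>\<alpha>\<in>{\<alpha>\<in>I n. \<alpha> i = p \<and> \<alpha> k = q}. b \<alpha>)" for p q
  have m: "monom n \<alpha> x = x i ^ \<alpha> i * x k ^ \<alpha> k" for \<alpha>
    unfolding monom_def using prod_two[of i n k "\<lambda>j. x j ^ \<alpha> j"] assms by simp
  have pr: "(\<Prod>j\<in>{1..n}. x j) = x i * x k" using prod_two[of i n k x] assms by simp
  have bound: "\<alpha> i \<le> 2 \<and> \<alpha> k \<le> 2" if "\<alpha> \<in> I n" for \<alpha> using assms that by (auto simp: I_def)
  have "(\<Sum>\<alpha>\<in>I n. b \<alpha> * monom n \<alpha> x) = (\<Sum>\<alpha>\<in>I n. b \<alpha> * (x i ^ \<alpha> i * x k ^ \<alpha> k))" by (simp add: m)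
  also have "\<dots> = (\<Sum>pq\<in>{..2::nat}\<times>{..2::nat}. \<Sum>\<alpha>\<in>{\<alpha>\<in>I n. (\<lambda>\<alpha>. (\<alpha> i, \<alpha> k)) \<alpha> = pq}. b \<alpha> * (x i ^ \<alpha> i * x k ^ \<alpha> k))"
    by (rule sum.group[symmetric]) (auto simp: finite_I dest: bound)
  also have "\<dots> = (\<Sum>pq\<in>{..2::nat}\<times>{..2::nat}. B (fst pq) (snd pq) * (x i ^ fst pq * x k ^ snd pq))"
  proof (rule sum.cong[OF refl])
    fix pq :: "nat \<times> nat"
    obtain p q where pq: "pq = (p, q)" by (cases pq)
    have "{\<alpha>\<in>I n. (\<lambda>\<alpha>. (\<alpha> i, \<alpha> k)) \<alpha> = pq} = {\<alpha>\<in>I n. \<alpha> i = p \<and> \<alpha> k = q}" by (auto simp: pq)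
    then show "(\<Sum>\<alpha>\<in>{\<alpha>\<in>I n. (\<lambda>\<alpha>. (\<alpha> i, \<alpha> k)) \<alpha> = pq}. b \<alpha> * (x i ^ \<alpha> i * x k ^ \<alpha> k))
        = B (fst pq) (snd pq) * (x i ^ fst pq * x k ^ snd pq)"
      by (simp add: pq B_def sum_distrib_right)
  qed
  also have "\<dots> = (\<Sum>p\<in>{..2::nat}. \<Sum>q\<in>{..2::nat}. B p q * (x i ^ p * x k ^ q))"
    by (simp add: sum.cartesian_product case_prod_beta)
  finally have s: "(\<Sum>\<alpha>\<in>I n. b \<alpha> * monom n \<alpha> x) = (\<Sum>p\<in>{..2::nat}. \<Sum>q\<in>{..2::nat}. B p q * (x i ^ p * x k ^ q))" .
  have e: "(\<Sum>p\<in>{..2::nat}. \<Sum>q\<in>{..2::nat}. B p q * (x i ^ p * x k ^ q)) =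
     B 0 0 + B 0 1 * x k + B 0 2 * x k^2 + B 1 0 * x i + B 1 1 * x i * x k + B 1 2 * x i * x k^2
     + B 2 0 * x i^2 + B 2 1 * x i^2 * x k + B 2 2 * x i^2 * x k^2"
    by (simp add: atMost_Suc numeral_2_eq_2 algebra_simps)
  show ?thesis unfolding fop_def pr s e polyP_def B_def[symmetric] by (simp add: algebra_simps)
qed

lemma TX_Z: "(\<lambda>B. if B \<in> P4 then ux B else 0) \<in> Zrel"
proof -
  define ax :: "nat set \<Rightarrow> int" where "ax A = (if A = {3} then 1 else if A = {4} then 2 else 0)" for A
  have "Zcoeffs ax" by (auto simp: Zcoeffs_def Z8_def ax_def)
  moreover have "(\<lambda>B. if B \<in> P4 then ux B else 0) = lincomb ax"
    by (rule ext) (simp add: lincomb_def sumP4 ax_def gen_def ux_def)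
  ultimately show ?thesis unfolding Zrel_def by blast
qed

lemma TY_Z: "(\<lambda>B. if B \<in> P4 then uy B else 0) \<in> Zrel"
proof -
  define ax :: "nat set \<Rightarrow> int" where "ax A = (if A = {1} then 1 else if A = {2} then 2 else 0)" for A
  have "Zcoeffs ax" by (auto simp: Zcoeffs_def Z8_def ax_def)
  moreover have "(\<lambda>B. if B \<in> P4 then uy B else 0) = lincomb ax"
    by (rule ext) (simp add: lincomb_def sumP4 ax_def gen_def uy_def)
  ultimately show ?thesis unfolding Zrel_def by blast
qed

lemma T1_Z: "(\<lambda>B. if B \<in> P4 then 1 else 0) \<in> Zrel"
proof -
  define ax :: "nat set \<Rightarrow> int" where "ax A = (if A = {} then 1 else 0)" for A
  have "Zcoeffs ax" by (auto simp: Zcoeffs_def Z8_def ax_def)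
  moreover have "(\<lambda>B. if B \<in> P4 then 1 else 0) = lincomb ax"
    by (rule ext) (simp add: lincomb_def sumP4 ax_def gen_def)
  ultimately show ?thesis unfolding Zrel_def by blast
qed

lemma ux_mod: "ux B mod 8 = ux B" by (simp add: ux_def)
lemma uy_mod: "uy B mod 8 = uy B" by (simp add: uy_def)

lemma pair_even:
  assumes pres: "preserves n (fop n b) Zrel" and ik: "i \<in> {1..n}" "k \<in> {1..n}" "i \<noteq> k"
  shows "\<forall>p\<le>2. \<forall>q\<le>2. even (\<Sum>\<alpha>\<in>{\<alpha>\<in>I n. \<alpha> i = p \<and> \<alpha> k = q}. b \<alpha>)"
proof -
  define m where "m p q = (\<Sum>\<alpha>\<in>{\<alpha>\<in>I n. \<alpha> i = p \<and> \<alpha> k = q}. b \<alpha>)" for p q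
  define us where "us j = (if j = i then (\<lambda>B. if B \<in> P4 then ux B else 0)
      else if j = k then (\<lambda>B. if B \<in> P4 then uy B else 0) else (\<lambda>B. if B \<in> P4 then 1 else 0))" for j
  have "\<forall>j\<in>{1..n}. us j \<in> Zrel" using TX_Z TY_Z T1_Z by (auto simp: us_def)
  then have W: "(\<lambda>B. if B \<in> P4 then fop n b (\<lambda>j. us j B) else 0) \<in> Zrel"
    using pres unfolding preserves_def by blast
  have "(\<lambda>B. if B \<in> P4 then fop n b (\<lambda>j. us j B) else 0)
      = (\<lambda>B. if B \<in> P4 then polyP m (ux B) (uy B) mod 8 else 0)"
  proof (rule ext)
    fix B
    show "(if B \<in> P4 then fop n b (\<lambda>j. us j B) else 0) = (if B \<in> P4 then polyP m (ux B) (uy B) mod 8 else 0)"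
    proof (cases "B \<in> P4")
      case True
      have "fop n b (\<lambda>j. us j B) = polyP m ((\<lambda>j. us j B) i) ((\<lambda>j. us j B) k) mod 8"
        unfolding m_def using ik True by (intro fop_two) (auto simp: us_def)
      then show ?thesis using True ik by (simp add: us_def)
    qed simp
  qed
  with W have "(\<lambda>B. if B \<in> P4 then polyP m (ux B) (uy B) mod 8 else 0) \<in> Zrel" by simp
  from zmain[OF this] show ?thesis unfolding m_def[symmetric]
    by (auto simp: le_Suc_eq numeral_2_eq_2)
qed

lemma pick_two:
  fixes n :: nat and S :: "nat set"
  assumes "S \<subseteq> {1..n}" "card S \<le> 2" "n \<ge> 2"
  shows "\<exists>i k. i \<in> {1..n} \<and> k \<in> {1..n} \<and> i \<noteq> k \<and> S \<subseteq> {i,k}"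
proof (cases "S = {}")
  case True then show ?thesis using assms(3) by (intro exI[of _ 1] exI[of _ 2]) auto
next
  case False
  then obtain i where i: "i \<in> S" by blast
  have fin: "finite S" using assms(1) finite_subset by blast
  have c: "card (S - {i}) \<le> Suc 0" using assms(2) i fin by (simp add: card_Diff_singleton)
  show ?thesis
  proof (cases "S - {i} = {}")
    case True
    define k where "k = (if i = 1 then 2 else 1::nat)"
    have "k \<in> {1..n}" "k \<noteq> i" using assms(3) by (auto simp: k_def)
    moreover have "i \<in> {1..n}" using i assms(1) by blast
    ultimately show ?thesis using True by (intro exI[of _ i] exI[of _ k]) auto
  next
    case False
    then obtain k where k: "k \<in> S - {i}" by blast
    have "S - {i} = {k}" using c k fin by (auto simp: card_le_Suc0_iff_eq)
    then show ?thesis using i k assms(1) by (intro exI[of _ i] exI[of _ k]) auto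
  qed
qed

theorem lemma3p8:
  fixes n :: nat and b :: "(nat \<Rightarrow> nat) \<Rightarrow> int"
  assumes "n \<ge> 2"
    and "\<forall>\<alpha>\<in>I n. b \<alpha> \<in> {0, 1}"
    and "preserves n (fop n b) Zrel"
  shows "\<forall>\<alpha>\<in>I n. b \<alpha> = 0"
proof -
  define supp where "supp \<alpha> = {j\<in>{1..n}. \<alpha> j \<noteq> (0::nat)}" for \<alpha>
  have cs: "card (supp \<alpha>) \<le> 2" if "\<alpha> \<in> I n" for \<alpha> using that by (simp add: I_def supp_def)
  have "b \<alpha> = 0" if "\<alpha> \<in> I n" for \<alpha>
    using that
  proof (induction \<alpha> rule: measure_induct_rule[where f = "\<lambda>\<alpha>. 3 - card (supp \<alpha>)"])
    case (less \<alpha>)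
    have sub: "supp \<alpha> \<subseteq> {1..n}" by (auto simp: supp_def)
    obtain i k where ik: "i \<in> {1..n}" "k \<in> {1..n}" "i \<noteq> k" "supp \<alpha> \<subseteq> {i,k}"
      using pick_two[OF sub cs[OF less.prems] assms(1)] by blast
    have bd: "\<alpha> i \<le> 2" "\<alpha> k \<le> 2" using less.prems ik by (auto simp: I_def)
    define S where "S = {\<beta>\<in>I n. \<beta> i = \<alpha> i \<and> \<beta> k = \<alpha> k}"
    have ev: "even (\<Sum>\<beta>\<in>S. b \<beta>)"
      using pair_even[OF assms(3) ik(1-3)] bd unfolding S_def by blast
    have fS: "finite S" unfolding S_def using finite_I by auto
    have aS: "\<alpha> \<in> S" using less.prems by (simp add: S_def)
    have z: "b \<beta> = 0" if "\<beta> \<in> S - {\<alpha>}" for \<beta>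
    proof -
      have bI: "\<beta> \<in> I n" "\<beta> i = \<alpha> i" "\<beta> k = \<alpha> k" "\<beta> \<noteq> \<alpha>" using that by (auto simp: S_def)
      obtain j where j: "\<beta> j \<noteq> \<alpha> j" using bI(4) by blast
      have jn: "j \<in> {1..n}"
      proof (rule ccontr)
        assume "j \<notin> {1..n}"
        then have "\<beta> j = 0" "\<alpha> j = 0" using bI(1) less.prems unfolding I_def by blast+
        with j show False by simp
      qed
      have jik: "j \<noteq> i" "j \<noteq> k" using j bI by auto
      have aj: "\<alpha> j = 0" using ik(4) jn jik by (auto simp: supp_def)
      have "supp \<alpha> \<subseteq> supp \<beta>" using ik(4) bI(2,3) by (auto simp: supp_def)
      moreover have "j \<in> supp \<beta> - supp \<alpha>" using jn j aj by (auto simp: supp_def)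
      ultimately have "supp \<alpha> \<subset> supp \<beta>" by blast
      moreover have "finite (supp \<beta>)" by (simp add: supp_def)
      ultimately have "card (supp \<alpha>) < card (supp \<beta>)" by (rule psubset_card_mono[rotated])
      moreover have "card (supp \<beta>) \<le> 2" using cs[OF bI(1)] .
      ultimately have "3 - card (supp \<beta>) < 3 - card (supp \<alpha>)" by linarith
      then show ?thesis using less.IH bI(1) by blast
    qed
    have "(\<Sum>\<beta>\<in>S. b \<beta>) = b \<alpha> + (\<Sum>\<beta>\<in>S - {\<alpha>}. b \<beta>)" using fS aS by (rule sum.remove)
    also have "(\<Sum>\<beta>\<in>S - {\<alpha>}. b \<beta>) = 0" using z by simp
    finally have "even (b \<alpha>)" using ev by simp
    moreover have "b \<alpha> \<in> {0,1}" using assms(2) less.prems by blast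
    ultimately show ?case by auto
  qed
  then show ?thesis by blast
qed

end
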